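(* Let $n$ be an odd positive integer and let $\mathcal{B}$ be a balanced bipartite graph on $2n$ vertices with parts $V_1$ and $V_2$ such that $\delta(\mathcal{B})\geq\frac{n}{2}+1$. Let $S\subseteq V(\mathcal{B})$ with $|S|=n+1$. Then $\mathcal{B}[S]$ is a forest if and only if $\min\{|S\cap V_1|,|S\cap V_2|\}=1$.
   Context: All graphs are finite and simple. A balanced bipartite graph on $2n$ vertices is a bipartite graph with a given bipartition $(V_1,V_2)$ where $|V_1|=|V_2|=n$. $\delta(G)$ denotes the minimum degree of $G$, and $G[S]$ the subgraph induced by $S\subseteq V(G)$. *)

theory Defs
  imports Complex_Main
begin

definition simple_graph :: "'a set \<Rightarrow> ('a \<Rightarrow> 'a \<Rightarrow> bool) \<Rightarrow> bool" where
  "simple_graph V E \<longleftrightarrow> finite V \<and> (\<forall>u v. E u v \<longrightarrow> E v u) \<and> (\<forall>v. \<not> E v v)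
     \<and> (\<forall>u v. E u v \<longrightarrow> u \<in> V \<and> v \<in> V)"

definition balanced_bipartite :: "nat \<Rightarrow> 'a set \<Rightarrow> 'a set \<Rightarrow> ('a \<Rightarrow> 'a \<Rightarrow> bool) \<Rightarrow> bool" where
  "balanced_bipartite n V1 V2 E \<longleftrightarrow> simple_graph (V1 \<union> V2) E \<and> V1 \<inter> V2 = {}
     \<and> card V1 = n \<and> card V2 = n
     \<and> (\<forall>u v. E u v \<longrightarrow> (u \<in> V1 \<and> v \<in> V2) \<or> (u \<in> V2 \<and> v \<in> V1))"

definition degree :: "'a set \<Rightarrow> ('a \<Rightarrow> 'a \<Rightarrow> bool) \<Rightarrow> 'a \<Rightarrow> nat" where
  "degree V E v = card {u \<in> V. E v u}"

definition min_degree :: "'a set \<Rightarrow> ('a \<Rightarrow> 'a \<Rightarrow> bool) \<Rightarrow> nat" where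
  "min_degree V E = Min (degree V E ` V)"

definition is_cycle :: "'a set \<Rightarrow> ('a \<Rightarrow> 'a \<Rightarrow> bool) \<Rightarrow> 'a list \<Rightarrow> bool" where
  "is_cycle V E cs \<longleftrightarrow> length cs \<ge> 3 \<and> distinct cs \<and> set cs \<subseteq> V
     \<and> (\<forall>i < length cs - 1. E (cs ! i) (cs ! Suc i)) \<and> E (last cs) (hd cs)"

definition induced_forest :: "('a \<Rightarrow> 'a \<Rightarrow> bool) \<Rightarrow> 'a set \<Rightarrow> bool" where
  "induced_forest E S \<longleftrightarrow> \<not> (\<exists>cs. is_cycle S (\<lambda>u v. u \<in> S \<and> v \<in> S \<and> E u v) cs)"

end

theory Submission imports Defs begin

definition gpath :: "'a set \<Rightarrow> ('a \<Rightarrow> 'a \<Rightarrow> bool) \<Rightarrow> 'a list \<Rightarrow> bool" where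
  "gpath W R ps \<longleftrightarrow> ps \<noteq> [] \<and> distinct ps \<and> set ps \<subseteq> W \<and> (\<forall>i < length ps - 1. R (ps ! i) (ps ! Suc i))"

lemma mindeg2_cycle:
  assumes fin: "finite W" and ne: "W \<noteq> {}" and irr: "\<forall>v. \<not> R v v"
    and deg: "\<forall>v\<in>W. 2 \<le> card {u\<in>W. R v u}"
  shows "\<exists>cs. is_cycle W R cs"
proof -
  obtain w where w: "w \<in> W" using ne by blast
  have "gpath W R [w]" using w by (simp add: gpath_def)
  hence P0: "\<exists>ps. gpath W R ps \<and> length ps = 1" by fastforce
  have bnd: "\<forall>y. (\<exists>ps. gpath W R ps \<and> length ps = y) \<longrightarrow> y \<le> card W"
  proof (intro allI impI)
    fix y assume "\<exists>ps. gpath W R ps \<and> length ps = y"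
    then obtain ps where "gpath W R ps" "length ps = y" by blast
    thus "y \<le> card W" using fin unfolding gpath_def
      by (metis card_mono distinct_card)
  qed
  obtain L where L: "\<exists>ps. gpath W R ps \<and> length ps = L"
    and Lmax: "\<forall>y. (\<exists>ps. gpath W R ps \<and> length ps = y) \<longrightarrow> y \<le> L"
    using Nat.ex_has_greatest_nat[OF P0 bnd] by blast
  obtain ps where ps: "gpath W R ps" and lps: "length ps = L" using L by blast
  have psne: "ps \<noteq> []" and dps: "distinct ps" and sps: "set ps \<subseteq> W"
    and adj: "\<forall>i < L - 1. R (ps ! i) (ps ! Suc i)" using ps lps by (auto simp: gpath_def)
  define v where "v = last ps"
  have vL: "v = ps ! (L - 1)" using psne lps by (simp add: v_def last_conv_nth)
  have vW: "v \<in> W" using sps psne v_def by auto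
  define N where "N = {u\<in>W. R v u}"
  have cN: "2 \<le> card N" using deg vW N_def by auto
  have finN: "finite N" using fin N_def by auto
  have Nsub: "N \<subseteq> set ps"
  proof
    fix u assume uN: "u \<in> N"
    show "u \<in> set ps"
    proof (rule ccontr)
      assume nu: "u \<notin> set ps"
      have "gpath W R (ps @ [u])"
        unfolding gpath_def
      proof (intro conjI allI impI)
        show "ps @ [u] \<noteq> []" by simp
        show "distinct (ps @ [u])" using dps nu by simp
        show "set (ps @ [u]) \<subseteq> W" using sps uN N_def by auto
        fix i assume i: "i < length (ps @ [u]) - 1"
        show "R ((ps @ [u]) ! i) ((ps @ [u]) ! Suc i)"
        proof (cases "i < L - 1")
          case True hence "Suc i < L" by linarith
          thus ?thesis using adj lps True by (simp add: nth_append)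
        next
          case False
          hence "i = L - 1" using i lps by simp
          moreover have "0 < L" using psne lps by auto
          ultimately show ?thesis using uN N_def vL lps psne by (simp add: nth_append)
        qed
      qed
      hence "\<exists>ps'. gpath W R ps' \<and> length ps' = L + 1" using lps by (intro exI[of _ "ps @ [u]"]) simp
      hence "L + 1 \<le> L" using Lmax by blast
      thus False by simp
    qed
  qed
  have vN: "v \<notin> N" using irr N_def by auto
  have "card (insert v N) \<le> card (set ps)"
    using Nsub vW psne v_def by (intro card_mono) auto
  moreover have "card (insert v N) = card N + 1" using vN finN by simp
  moreover have "card (set ps) = L" using distinct_card[OF dps] lps by simp
  ultimately have "3 \<le> L" using cN by linarith
  have "N - {ps ! (L - 2)} \<noteq> {}"
  proof
    assume "N - {ps ! (L - 2)} = {}"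
    hence "N \<subseteq> {ps ! (L - 2)}" by blast
    hence "card N \<le> card {ps ! (L - 2)}" by (intro card_mono) auto
    hence "card N \<le> 1" by simp
    thus False using cN by simp
  qed
  then obtain u where uN: "u \<in> N" and un: "u \<noteq> ps ! (L - 2)" by blast
  have "u \<in> set ps" using Nsub uN by blast
  then obtain j where j: "j < L" "ps ! j = u" using lps by (auto simp: in_set_conv_nth)
  have "j \<noteq> L - 1" using vN uN vL j by auto
  moreover have "j \<noteq> L - 2" using un j by auto
  ultimately have j3: "j + 3 \<le> L" using j \<open>3 \<le> L\<close> by linarith
  define cs where "cs = drop j ps"
  have "is_cycle W R cs"
    unfolding is_cycle_def
  proof (intro conjI allI impI)
    show "3 \<le> length cs" using j3 lps cs_def by simp
    show "distinct cs" using dps cs_def by simp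
    show "set cs \<subseteq> W" using sps cs_def by (meson set_drop_subset subset_trans)
    fix i assume "i < length cs - 1"
    hence "j + i < L - 1" using cs_def lps by simp
    hence "R (ps ! (j + i)) (ps ! Suc (j + i))" using adj by blast
    moreover have "j \<le> length ps" using j lps by simp
    ultimately show "R (cs ! i) (cs ! Suc i)" unfolding cs_def by (simp add: nth_drop)
  next
    have "last cs = v" using cs_def v_def j lps by (simp add: last_drop)
    moreover have "hd cs = u" using cs_def j lps by (simp add: hd_drop_conv_nth)
    ultimately show "R (last cs) (hd cs)" using uN N_def by simp
  qed
  thus ?thesis by blast
qed

lemma is_cycle_mono: "is_cycle W' R cs \<Longrightarrow> W' \<subseteq> W \<Longrightarrow> is_cycle W R cs"
  unfolding is_cycle_def by auto

lemma acyclic_leaf: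
  assumes "finite W" "W \<noteq> {}" "\<forall>v. \<not> R v v" "\<not> (\<exists>cs. is_cycle W R cs)"
  shows "\<exists>v\<in>W. card {u\<in>W. R v u} \<le> 1"
  using mindeg2_cycle[of W R] assms by force

lemma acyclic_count:
  assumes "finite W" "W \<noteq> {}" "\<forall>u v. R u v \<longrightarrow> R v u" "\<forall>v. \<not> R v v"
    "\<not> (\<exists>cs. is_cycle W R cs)"
  shows "card (SIGMA x:W \<inter> A. {u\<in>W - A. R x u}) < card W"
  using assms
proof (induction "card W" arbitrary: W rule: less_induct)
  case less
  note fin = less.prems(1) and sym = less.prems(3) and irr = less.prems(4)
  obtain v where vW: "v \<in> W" and vdeg: "card {u\<in>W. R v u} \<le> 1"
    using acyclic_leaf[of W R] less.prems by blast
  define W' where "W' = W - {v}"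
  define Nv where "Nv = {u\<in>W. R v u}"
  define D where "D = (if v \<in> A then {v} \<times> Nv else Nv \<times> {v})"
  have finNv: "finite Nv" using fin Nv_def by simp
  have cD: "card D \<le> 1" using vdeg finNv unfolding D_def Nv_def[symmetric]
    by (simp add: card_cartesian_product)
  have finD: "finite D" using finNv D_def by simp
  have sub: "(SIGMA x:W \<inter> A. {u\<in>W - A. R x u}) \<subseteq> (SIGMA x:W' \<inter> A. {u\<in>W' - A. R x u}) \<union> D"
  proof
    fix p assume p: "p \<in> (SIGMA x:W \<inter> A. {u\<in>W - A. R x u})"
    then obtain x u where pxu: "p = (x, u)" "x \<in> W" "x \<in> A" "u \<in> W" "u \<notin> A" "R x u" by blast
    show "p \<in> (SIGMA x:W' \<inter> A. {u\<in>W' - A. R x u}) \<union> D"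
    proof (cases "x = v \<or> u = v")
      case True
      thus ?thesis using pxu sym unfolding D_def Nv_def by auto
    next
      case False
      thus ?thesis using pxu unfolding W'_def by auto
    qed
  qed
  have finS': "finite (SIGMA x:W' \<inter> A. {u\<in>W' - A. R x u})" using fin W'_def by auto
  show ?case
  proof (cases "W' = {}")
    case True
    hence "W = {v}" using vW W'_def by blast
    hence "(SIGMA x:W \<inter> A. {u\<in>W - A. R x u}) = {}" by auto
    thus ?thesis using \<open>W = {v}\<close> by simp
  next
    case False
    have cW': "card W' < card W" using vW fin W'_def by (metis card_Diff1_less)
    have "\<not> (\<exists>cs. is_cycle W' R cs)" using less.prems(5) is_cycle_mono[of W' R _ W] W'_def by blast
    hence IH: "card (SIGMA x:W' \<inter> A. {u\<in>W' - A. R x u}) < card W'"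
      using less.hyps[OF cW'] fin W'_def False sym irr by auto
    have "card (SIGMA x:W \<inter> A. {u\<in>W - A. R x u}) \<le> card ((SIGMA x:W' \<inter> A. {u\<in>W' - A. R x u}) \<union> D)"
      using sub finS' finD by (intro card_mono) auto
    also have "\<dots> \<le> card (SIGMA x:W' \<inter> A. {u\<in>W' - A. R x u}) + card D" by (rule card_Un_le)
    finally show ?thesis using IH cD cW' by linarith
  qed
qed


lemma cycle_two:
  assumes cyc: "is_cycle W R cs" and cross: "\<forall>u v. R u v \<longrightarrow> (u \<in> X \<longleftrightarrow> v \<notin> X)"
  shows "\<exists>x y. x \<noteq> y \<and> x \<in> W \<inter> X \<and> y \<in> W \<inter> X"
proof -
  define L where "L = length cs"
  have L3: "3 \<le> L" and dc: "distinct cs" and sc: "set cs \<subseteq> W"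
    and adj: "\<forall>i < L - 1. R (cs ! i) (cs ! Suc i)" and lh: "R (last cs) (hd cs)"
    using cyc unfolding is_cycle_def L_def by auto
  have r01: "R (cs!0) (cs!1)" using adj[rule_format, of 0] L3 by simp
  have r12: "R (cs!1) (cs!2)" using adj[rule_format, of 1] L3 by (simp add: numeral_2_eq_2)
  have cne: "cs \<noteq> []" using L3 L_def by auto
  have rl: "R (cs!(L-1)) (cs!0)" using lh cne L_def by (simp add: last_conv_nth hd_conv_nth)
  have inW: "\<And>i. i < L \<Longrightarrow> cs ! i \<in> W" using sc L_def by (meson nth_mem subsetD)
  have neq: "\<And>i j. i < L \<Longrightarrow> j < L \<Longrightarrow> i \<noteq> j \<Longrightarrow> cs ! i \<noteq> cs ! j"
    using dc L_def by (simp add: nth_eq_iff_index_eq)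
  show ?thesis
  proof (cases "cs!1 \<in> X")
    case False
    hence "cs!0 \<in> X" "cs!2 \<in> X" using r01 r12 cross by blast+
    moreover have "cs!0 \<noteq> cs!2" using neq L3 by simp
    moreover have "cs!0 \<in> W" "cs!2 \<in> W" using inW L3 by auto
    ultimately show ?thesis by blast
  next
    case True
    hence "cs!0 \<notin> X" using r01 cross by blast
    hence "cs!(L-1) \<in> X" using rl cross by blast
    moreover have "cs!1 \<noteq> cs!(L-1)" using neq L3 by simp
    moreover have "cs!1 \<in> W" "cs!(L-1) \<in> W" using inW L3 by auto
    ultimately show ?thesis using True by blast
  qed
qed


lemma bb_sym: "balanced_bipartite n V1 V2 E \<Longrightarrow> balanced_bipartite n V2 V1 E"
  unfolding balanced_bipartite_def by (auto simp: Un_commute Int_commute)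

lemma arith_core:
  fixes a b c n :: int
  assumes "a + b = n + 1" "2 \<le> a" "a \<le> b" "b - a + 4 \<le> 2 * c" "a * c < n + 1"
  shows False
proof -
  have "a * (b - a + 4) \<le> a * (2 * c)" using assms by (intro mult_left_mono) auto
  moreover have "0 \<le> (b - a) * (a - 2)" using assms by simp
  ultimately show False using assms by (simp add: algebra_simps)
qed

lemma core:
  fixes n :: nat and X Y S :: "'a set" and E :: "'a \<Rightarrow> 'a \<Rightarrow> bool"
  assumes odd: "odd n" and bb: "balanced_bipartite n X Y E"
    and md: "real (min_degree (X \<union> Y) E) \<ge> real n / 2 + 1"
    and SV: "S \<subseteq> X \<union> Y" and cS: "card S = n + 1"
    and a2: "2 \<le> card (S \<inter> X)" and ab: "card (S \<inter> X) \<le> card (S \<inter> Y)"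
  shows "\<exists>cs. is_cycle S (\<lambda>u v. u \<in> S \<and> v \<in> S \<and> E u v) cs"
proof (rule ccontr)
  assume nc: "\<not> (\<exists>cs. is_cycle S (\<lambda>u v. u \<in> S \<and> v \<in> S \<and> E u v) cs)"
  define R where "R = (\<lambda>u v. u \<in> S \<and> v \<in> S \<and> E u v)"
  have sg: "simple_graph (X \<union> Y) E" and disj: "X \<inter> Y = {}" and cX: "card X = n" and cY: "card Y = n"
    and bip: "\<forall>u v. E u v \<longrightarrow> (u \<in> X \<and> v \<in> Y) \<or> (u \<in> Y \<and> v \<in> X)"
    using bb unfolding balanced_bipartite_def by auto
  have finV: "finite (X \<union> Y)" and sym: "\<forall>u v. E u v \<longrightarrow> E v u" and irr: "\<forall>v. \<not> E v v"
    using sg unfolding simple_graph_def by auto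
  have finS: "finite S" using finV SV finite_subset by blast
  have finY: "finite Y" using finV by simp
  define a where "a = card (S \<inter> X)"
  define b where "b = card (S \<inter> Y)"
  have "S = (S \<inter> X) \<union> (S \<inter> Y)" using SV by blast
  hence abn: "a + b = n + 1" using cS disj finS a_def b_def
    by (metis card_Un_disjoint finite_Int inf_assoc inf_bot_right inf_left_commute)
  define m where "m = min_degree (X \<union> Y) E"
  have m2: "n + 2 \<le> 2 * m" using md m_def by simp
  have m3: "n + 3 \<le> 2 * m" using m2 odd by presburger
  have Sne: "S \<noteq> {}" using cS by auto
  have cnt: "card (SIGMA x:S \<inter> X. {u\<in>S - X. R x u}) < card S"
    using acyclic_count[of S R X] finS Sne sym irr nc unfolding R_def by blast
  have each: "m + b \<le> card {u\<in>S - X. R x u} + n" if xSX: "x \<in> S \<inter> X" for x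
  proof -
    define Nx where "Nx = {u \<in> X \<union> Y. E x u}"
    have "m \<le> degree (X \<union> Y) E x" unfolding m_def min_degree_def
      using finV xSX SV by (intro Min_le) auto
    hence mN: "m \<le> card Nx" unfolding degree_def Nx_def by simp
    have NY: "Nx \<subseteq> Y" using bip xSX disj Nx_def by blast
    have "Nx \<subseteq> (Nx \<inter> S) \<union> (Y - S)" using NY by blast
    hence "card Nx \<le> card (Nx \<inter> S) + card (Y - S)"
      by (metis card_Un_le card_mono finY finite_Diff finite_Un finite_subset NY inf_le1 le_trans)
    moreover have "card (Y - S) + b = n"
      using cY finY b_def by (metis Int_commute Int_lower2 card_Diff_subset_Int finite_Int le_add_diff_inverse2 card_mono Diff_Int2 Int_absorb card_Diff_subset)
    moreover have "Nx \<inter> S = {u\<in>S - X. R x u}" using NY xSX disj SV unfolding Nx_def R_def by blast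
    hence "card (Nx \<inter> S) = card {u\<in>S - X. R x u}" by simp
    ultimately show ?thesis using mN by linarith
  qed
  have "card (SIGMA x:S \<inter> X. {u\<in>S - X. R x u}) = (\<Sum>x\<in>S \<inter> X. card {u\<in>S - X. R x u})"
    using finS by (intro card_SigmaI) auto
  moreover have "(\<Sum>x\<in>S \<inter> X. (m + b)) \<le> (\<Sum>x\<in>S \<inter> X. card {u\<in>S - X. R x u} + n)"
    using each by (intro sum_mono) auto
  ultimately have "a * (m + b) \<le> card (SIGMA x:S \<inter> X. {u\<in>S - X. R x u}) + a * n"
    using a_def by (simp add: sum.distrib)
  hence "a * (m + b) < (n + 1) + a * n" using cnt cS by linarith
  hence i1: "int a * (int m + int b - int n) < int n + 1" by (simp add: algebra_simps flip: of_nat_mult of_nat_add) 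
  have m3i: "int n + 3 \<le> 2 * int m" using m3 by linarith
  have p1: "int a + int b = int n + 1" using abn by linarith
  have p2: "2 \<le> int a" using a2 a_def by linarith
  have p3: "int a \<le> int b" using ab a_def b_def by linarith
  have p4: "int b - int a + 4 \<le> 2 * (int m + int b - int n)" using p1 m3i by (simp add: algebra_simps)
  show False using arith_core[OF p1 p2 p3 p4 i1] .
qed


theorem corollary2p5:
  fixes n :: nat and V1 V2 S :: "'a set" and E :: "'a \<Rightarrow> 'a \<Rightarrow> bool"
  assumes "odd n" and "n > 0"
    and "balanced_bipartite n V1 V2 E"
    and "real (min_degree (V1 \<union> V2) E) \<ge> real n / 2 + 1"
    and "S \<subseteq> V1 \<union> V2" and "card S = n + 1"
  shows "induced_forest E S \<longleftrightarrow> min (card (S \<inter> V1)) (card (S \<inter> V2)) = 1"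
proof -
  note bb = assms(3)
  have sg: "simple_graph (V1 \<union> V2) E" and disj: "V1 \<inter> V2 = {}" and c1: "card V1 = n" and c2: "card V2 = n"
    and bip: "\<forall>u v. E u v \<longrightarrow> (u \<in> V1 \<and> v \<in> V2) \<or> (u \<in> V2 \<and> v \<in> V1)"
    using bb unfolding balanced_bipartite_def by auto
  have finV: "finite (V1 \<union> V2)" using sg unfolding simple_graph_def by auto
  have finS: "finite S" using finV assms(5) finite_subset by blast
  define a where "a = card (S \<inter> V1)"
  define b where "b = card (S \<inter> V2)"
  have "S = (S \<inter> V1) \<union> (S \<inter> V2)" using assms(5) by blast
  hence abn: "a + b = n + 1" using assms(6) disj finS a_def b_def
    by (metis card_Un_disjoint finite_Int inf_assoc inf_bot_right inf_left_commute)
  have f1: "finite V1" and f2: "finite V2" using finV by auto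
  have an: "a \<le> n" using card_mono[OF f1, of "S \<inter> V1"] c1 a_def by auto
  have bn: "b \<le> n" using card_mono[OF f2, of "S \<inter> V2"] c2 b_def by auto
  define R where "R = (\<lambda>u v. u \<in> S \<and> v \<in> S \<and> E u v)"
  show ?thesis
  proof
    assume f: "induced_forest E S"
    show "min (card (S \<inter> V1)) (card (S \<inter> V2)) = 1"
    proof (rule ccontr)
      assume "min (card (S \<inter> V1)) (card (S \<inter> V2)) \<noteq> 1"
      hence a2: "2 \<le> a" and b2: "2 \<le> b" using an bn abn a_def b_def by auto
      have "\<exists>cs. is_cycle S R cs"
      proof (cases "a \<le> b")
        case True
        thus ?thesis using core[OF assms(1) bb assms(4) assms(5) assms(6)] a2 a_def b_def R_def by auto
      next
        case False
        have "real (min_degree (V2 \<union> V1) E) \<ge> real n / 2 + 1" using assms(4) by (simp add: Un_commute)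
        moreover have "S \<subseteq> V2 \<union> V1" using assms(5) by blast
        ultimately show ?thesis using core[OF assms(1) bb_sym[OF bb] _ _ assms(6)] b2 False a_def b_def R_def by auto
      qed
      thus False using f unfolding induced_forest_def R_def by blast
    qed
  next
    assume m1: "min (card (S \<inter> V1)) (card (S \<inter> V2)) = 1"
    show "induced_forest E S"
      unfolding induced_forest_def
    proof
      assume "\<exists>cs. is_cycle S (\<lambda>u v. u \<in> S \<and> v \<in> S \<and> E u v) cs"
      then obtain cs where cyc: "is_cycle S (\<lambda>u v. u \<in> S \<and> v \<in> S \<and> E u v) cs" by blast
      have two: "2 \<le> card (S \<inter> X)" if cr: "\<forall>u v. E u v \<longrightarrow> (u \<in> X \<longleftrightarrow> v \<notin> X)" for X
      proof -
        obtain x y where "x \<noteq> y" "x \<in> S \<inter> X" "y \<in> S \<inter> X"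
          using cycle_two[OF cyc, of X] cr by blast
        hence "card {x, y} \<le> card (S \<inter> X)" using finS by (intro card_mono) auto
        thus ?thesis using \<open>x \<noteq> y\<close> by simp
      qed
      have cr1: "\<forall>u v. E u v \<longrightarrow> (u \<in> V1 \<longleftrightarrow> v \<notin> V1)"
      proof (intro allI impI)
        fix u v assume "E u v"
        thus "(u \<in> V1 \<longleftrightarrow> v \<notin> V1)" using bip disj by auto
      qed
      have cr2: "\<forall>u v. E u v \<longrightarrow> (u \<in> V2 \<longleftrightarrow> v \<notin> V2)"
      proof (intro allI impI)
        fix u v assume "E u v"
        thus "(u \<in> V2 \<longleftrightarrow> v \<notin> V2)" using bip disj by auto
      qed
      have "2 \<le> card (S \<inter> V1)" using two[OF cr1] .
      moreover have "2 \<le> card (S \<inter> V2)" using two[OF cr2] .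
      ultimately show False using m1 by linarith
    qed
  qed
qed

end
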